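(* If a topological space $X$ is the union $X=Y\cup Z$ of two subspaces $Y$ and $Z$ which are both $NWD$-separable, then $X$ is $NWD$-separable.
   Context: A space $X$ is $NWD$-separable if for every sequence $\{D_n:n<\omega\}$ of dense subsets of $X$ there are nowhere dense (in $X$) sets $E_n\subseteq D_n$ such that $\bigcup_{n<\omega}E_n$ is dense in $X$. *)

theory Defs
  imports "HOL-Analysis.Analysis"
begin

definition dense_in :: "'a topology \<Rightarrow> 'a set \<Rightarrow> bool" where
  "dense_in X D \<longleftrightarrow> D \<subseteq> topspace X \<and> X closure_of D = topspace X"

definition nowhere_dense_in :: "'a topology \<Rightarrow> 'a set \<Rightarrow> bool" where
  "nowhere_dense_in X E \<longleftrightarrow> E \<subseteq> topspace X \<and> X interior_of (X closure_of E) = {}"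

definition NWD_separable :: "'a topology \<Rightarrow> bool" where
  "NWD_separable X \<longleftrightarrow>
     (\<forall>D :: nat \<Rightarrow> 'a set. (\<forall>n. dense_in X (D n)) \<longrightarrow>
        (\<exists>E :: nat \<Rightarrow> 'a set. (\<forall>n. E n \<subseteq> D n \<and> nowhere_dense_in X (E n))
                      \<and> dense_in X (\<Union>n. E n)))"

end

theory Submission
  imports Defs
begin

lemma nd_alt:
  "nowhere_dense_in X E \<longleftrightarrow> E \<subseteq> topspace X \<and>
     (\<forall>U. openin X U \<and> U \<subseteq> X closure_of E \<longrightarrow> U = {})"
  unfolding nowhere_dense_in_def
  by (metis interior_of_maximal interior_of_subset openin_interior_of subset_empty)

lemma nd_sub:
  assumes "nowhere_dense_in (subtopology X S) E"
  shows "nowhere_dense_in X E"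
proof -
  have ES: "E \<subseteq> S" and Et: "E \<subseteq> topspace X"
    using assms unfolding nd_alt by auto
  have "U = {}" if U: "openin X U" "U \<subseteq> X closure_of E" for U
  proof (rule ccontr)
    assume "U \<noteq> {}"
    then have "U \<inter> X closure_of E \<noteq> {}" using U(2) by blast
    then have ne: "U \<inter> E \<noteq> {}" using openin_Int_closure_of_eq_empty[OF U(1)] by blast
    have o: "openin (subtopology X S) (U \<inter> S)"
      using U(1) by (simp add: openin_subtopology_Int)
    have "U \<inter> S \<subseteq> (subtopology X S) closure_of E"
      using U(2) ES unfolding closure_of_subtopology
      by (metis Int_absorb2 Int_commute inf_mono order_refl)
    then have "U \<inter> S = {}" using assms o unfolding nd_alt by blast
    then show False using ne ES by blast
  qed
  then show ?thesis using Et unfolding nd_alt by blast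
qed

lemma nd_subset:
  assumes "nowhere_dense_in X E" "F \<subseteq> E"
  shows "nowhere_dense_in X F"
  using assms closure_of_mono unfolding nd_alt by (metis order_trans)

lemma nd_Un:
  assumes "nowhere_dense_in X A" "nowhere_dense_in X B"
  shows "nowhere_dense_in X (A \<union> B)"
proof -
  have "U = {}" if U: "openin X U" "U \<subseteq> X closure_of (A \<union> B)" for U
  proof -
    have o: "openin X (U - X closure_of A)" using U(1) by (simp add: openin_diff)
    have "U - X closure_of A \<subseteq> X closure_of B" using U(2) by auto
    then have "U - X closure_of A = {}" using o assms(2) unfolding nd_alt by blast
    then have "U \<subseteq> X closure_of A" by blast
    then show ?thesis using U(1) assms(1) unfolding nd_alt by blast
  qed
  then show ?thesis using assms unfolding nd_alt by auto
qed

lemma nd_finite_Un: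
  assumes "\<And>n. nowhere_dense_in X (F n)"
  shows "nowhere_dense_in X (\<Union>n\<le>(m::nat). F n)"
proof (induction m)
  case 0 then show ?case using assms by simp
next
  case (Suc m)
  have "(\<Union>n\<le>Suc m. F n) = (\<Union>n\<le>m. F n) \<union> F (Suc m)"
    by (auto simp: atMost_Suc)
  then show ?case using nd_Un[OF Suc assms] by simp
qed

lemma key:
  fixes W D :: "nat \<Rightarrow> 'a set"
  assumes nwd: "NWD_separable (subtopology X S)" and S: "S \<subseteq> topspace X"
    and Wo: "\<And>m. openin X (W m)" and Wc: "\<And>m. W m \<subseteq> X closure_of (D m \<inter> S)"
  shows "\<exists>E. (\<forall>m. E m \<subseteq> D m \<and> nowhere_dense_in X (E m)) \<and>
     (\<forall>V. openin X V \<and> V \<noteq> {} \<and> (\<forall>n. V \<subseteq> X closure_of (\<Union>m\<in>{n..}. W m))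
          \<longrightarrow> V \<inter> (\<Union>m. E m) \<noteq> {})"
proof -
  define T where "T n = (\<Union>m\<in>{n..}. W m)" for n
  define D' where "D' n = (S \<inter> (\<Union>m\<in>{n..}. D m \<inter> W m)) \<union> (S - X closure_of T n)" for n
  have dense: "dense_in (subtopology X S) (D' n)" for n
  proof -
    have sub: "D' n \<subseteq> S" unfolding D'_def by auto
    have "S \<subseteq> X closure_of (D' n)"
    proof
      fix x assume xS: "x \<in> S"
      show "x \<in> X closure_of (D' n)"
      proof (cases "x \<in> X closure_of T n")
        case True
        have "W m \<subseteq> X closure_of (D' n)" if "m \<ge> n" for m
        proof -
          have "W m \<subseteq> W m \<inter> X closure_of (D m \<inter> S)" using Wc by blast
          also have "\<dots> \<subseteq> X closure_of (W m \<inter> (D m \<inter> S))"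
            by (rule openin_Int_closure_of_subset[OF Wo])
          also have "\<dots> \<subseteq> X closure_of (D' n)"
            by (rule closure_of_mono) (use that in \<open>auto simp: D'_def\<close>)
          finally show ?thesis .
        qed
        then have "T n \<subseteq> X closure_of (D' n)" unfolding T_def by auto
        then have "X closure_of T n \<subseteq> X closure_of (D' n)"
          by (simp add: closure_of_minimal)
        then show ?thesis using True by blast
      next
        case False
        then have "x \<in> D' n" using xS unfolding D'_def by blast
        then show ?thesis using closure_of_subset[of "D' n" X] sub S by blast
      qed
    qed
    then show ?thesis unfolding dense_in_def using sub S
      by (auto simp: closure_of_subtopology Int_absorb1)
  qed
  have "\<exists>E. (\<forall>n. E n \<subseteq> D' n \<and> nowhere_dense_in (subtopology X S) (E n)) \<and>
              dense_in (subtopology X S) (\<Union>n. E n)"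
  proof -
    have "(\<forall>n. dense_in (subtopology X S) (D' n)) \<longrightarrow> (\<exists>E. (\<forall>n. E n \<subseteq> D' n \<and> nowhere_dense_in (subtopology X S) (E n)) \<and>
              dense_in (subtopology X S) (\<Union>n. E n))"
      using nwd unfolding NWD_separable_def by (drule_tac x=D' in spec) assumption
    then show ?thesis using dense by (rule mp[OF _ allI])
  qed
  then obtain E' where E'a: "\<forall>n. E' n \<subseteq> D' n \<and> nowhere_dense_in (subtopology X S) (E' n)"
    and Ed: "dense_in (subtopology X S) (\<Union>n. E' n)" by blast
  have E'1: "E' n \<subseteq> D' n" for n using E'a by blast
  have E'2: "nowhere_dense_in (subtopology X S) (E' n)" for n using E'a by blast
  define E where "E m = (\<Union>n\<le>m. E' n) \<inter> D m \<inter> W m" for m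
  have "E m \<subseteq> D m \<and> nowhere_dense_in X (E m)" for m
  proof -
    have "nowhere_dense_in X (\<Union>n\<le>m. E' n)"
      by (rule nd_finite_Un) (rule nd_sub[OF E'2])
    from nd_subset[OF this, of "E m"] show ?thesis unfolding E_def by blast
  qed
  moreover have "V \<inter> (\<Union>m. E m) \<noteq> {}"
    if V: "openin X V" "V \<noteq> {}" "\<forall>n. V \<subseteq> X closure_of (\<Union>m\<in>{n..}. W m)" for V
  proof -
    have "V \<inter> S \<noteq> {}"
    proof -
      have "V \<inter> X closure_of (T 0) \<noteq> {}" using V unfolding T_def by blast
      then have "V \<inter> T 0 \<noteq> {}" using openin_Int_closure_of_eq_empty[OF V(1)] by blast
      then obtain m where "V \<inter> W m \<noteq> {}" unfolding T_def by blast
      then have "(V \<inter> W m) \<inter> X closure_of (D m \<inter> S) \<noteq> {}" using Wc by blast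
      then have "(V \<inter> W m) \<inter> (D m \<inter> S) \<noteq> {}"
        using openin_Int_closure_of_eq_empty[OF openin_Int[OF V(1) Wo]] by blast
      then show ?thesis by blast
    qed
    moreover have "openin (subtopology X S) (V \<inter> S)"
      using V(1) by (simp add: openin_subtopology_Int)
    ultimately have "(\<Union>n. E' n) \<inter> (V \<inter> S) \<noteq> {}"
      using Ed unfolding dense_in_def dense_intersects_open by blast
    then obtain x n where x: "x \<in> E' n" "x \<in> V" by blast
    then have "x \<in> X closure_of T n" using V(3) unfolding T_def by blast
    then have "x \<in> S \<inter> (\<Union>m\<in>{n..}. D m \<inter> W m)" using E'1[of n] x unfolding D'_def by blast
    then obtain m where m: "m \<ge> n" "x \<in> D m" "x \<in> W m" by auto
    then have "x \<in> E m" using x unfolding E_def by auto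
    then show ?thesis using x by blast
  qed
  ultimately show ?thesis by blast
qed

theorem corollary3p16:
  fixes X :: "'a topology" and Y Z :: "'a set"
  assumes "topspace X = Y \<union> Z"
    and "NWD_separable (subtopology X Y)"
    and "NWD_separable (subtopology X Z)"
  shows "NWD_separable X"
  unfolding NWD_separable_def
proof (intro allI impI)
  fix D :: "nat \<Rightarrow> 'a set"
  assume Dd: "\<forall>n. dense_in X (D n)"
  have Yt: "Y \<subseteq> topspace X" and Zt: "Z \<subseteq> topspace X" using assms(1) by auto
  define W where "W m = topspace X - X closure_of (D m \<inter> Z)" for m
  define Q where "Q m = topspace X - X closure_of (W m)" for m
  have Wo: "openin X (W m)" for m unfolding W_def by (simp add: openin_diff)
  have Oo: "openin X (Q m)" for m unfolding Q_def by (simp add: openin_diff)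
  have Wc: "W m \<subseteq> X closure_of (D m \<inter> Y)" for m
  proof -
    have "D m = (D m \<inter> Y) \<union> (D m \<inter> Z)" using Dd assms(1) unfolding dense_in_def by blast
    then have "topspace X = X closure_of (D m \<inter> Y) \<union> X closure_of (D m \<inter> Z)"
      using Dd unfolding dense_in_def by (metis closure_of_Un)
    then show ?thesis unfolding W_def by blast
  qed
  have Oc: "Q m \<subseteq> X closure_of (D m \<inter> Z)" for m
    unfolding Q_def W_def using closure_of_subset[of "topspace X - X closure_of (D m \<inter> Z)" X]
    by blast
  from key[where W=W and D=D, OF assms(2) Yt Wo Wc] obtain EY where EY0: "(\<forall>m. EY m \<subseteq> D m \<and> nowhere_dense_in X (EY m)) \<and>
    (\<forall>V. openin X V \<and> V \<noteq> {} \<and> (\<forall>n. V \<subseteq> X closure_of (\<Union>m\<in>{n..}. W m))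
          \<longrightarrow> V \<inter> (\<Union>m. EY m) \<noteq> {})"
    by (elim exE)
  note EY = conjunct1[OF EY0] and EYd = conjunct2[OF EY0]
  from key[where W=Q and D=D, OF assms(3) Zt Oo Oc] obtain EZ where EZ0: "(\<forall>m. EZ m \<subseteq> D m \<and> nowhere_dense_in X (EZ m)) \<and>
    (\<forall>V. openin X V \<and> V \<noteq> {} \<and> (\<forall>n. V \<subseteq> X closure_of (\<Union>m\<in>{n..}. Q m))
          \<longrightarrow> V \<inter> (\<Union>m. EZ m) \<noteq> {})"
    by (elim exE)
  note EZ = conjunct1[OF EZ0] and EZd = conjunct2[OF EZ0]
  define E where "E m = EY m \<union> EZ m" for m
  have "E n \<subseteq> D n \<and> nowhere_dense_in X (E n)" for n
    unfolding E_def using EY EZ nd_Un by blast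
  moreover have "dense_in X (\<Union>n. E n)"
  proof -
    have sub: "(\<Union>n. E n) \<subseteq> topspace X" using EY EZ unfolding E_def nd_alt by blast
    have "V \<inter> (\<Union>n. E n) \<noteq> {}" if V: "openin X V" "V \<noteq> {}" for V
    proof (cases "\<forall>n. V \<subseteq> X closure_of (\<Union>m\<in>{n..}. W m)")
      case True
      then show ?thesis using EYd V unfolding E_def by blast
    next
      case False
      then obtain N where N: "\<not> V \<subseteq> X closure_of (\<Union>m\<in>{N..}. W m)" by blast
      define V' where "V' = V - X closure_of (\<Union>m\<in>{N..}. W m)"
      have V'o: "openin X V'" unfolding V'_def using V(1) by (simp add: openin_diff)
      have V'ne: "V' \<noteq> {}" using N unfolding V'_def by blast
      have V'Q: "V' \<subseteq> Q m" if "m \<ge> N" for m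
      proof -
        have "W m \<subseteq> (\<Union>m\<in>{N..}. W m)" using that by auto
        moreover have "(\<Union>m\<in>{N..}. W m) \<subseteq> X closure_of (\<Union>m\<in>{N..}. W m)"
          by (rule closure_of_subset) (use Wo openin_subset in blast)
        ultimately have "W m \<subseteq> X closure_of (\<Union>m\<in>{N..}. W m)" by (rule order_trans)
        then have "V' \<inter> W m = {}" unfolding V'_def by blast
        then have "V' \<inter> X closure_of (W m) = {}"
          using openin_Int_closure_of_eq_empty[OF V'o] by blast
        then show ?thesis unfolding Q_def using V'o openin_subset by blast
      qed
      have "V' \<subseteq> X closure_of (\<Union>m\<in>{n..}. Q m)" for n
      proof -
        have "V' \<subseteq> Q (max n N)" using V'Q by simp
        also have "\<dots> \<subseteq> (\<Union>m\<in>{n..}. Q m)" by (rule UN_upper) simp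
        also have "\<dots> \<subseteq> X closure_of (\<Union>m\<in>{n..}. Q m)"
          by (rule closure_of_subset) (use Oo openin_subset in blast)
        finally show ?thesis .
      qed
      then have "V' \<inter> (\<Union>m. EZ m) \<noteq> {}" using EZd V'o V'ne by blast
      then show ?thesis unfolding E_def V'_def by blast
    qed
    then show ?thesis unfolding dense_in_def dense_intersects_open using sub
      by (metis inf_commute)
  qed
  ultimately show "\<exists>E. (\<forall>n. E n \<subseteq> D n \<and> nowhere_dense_in X (E n)) \<and> dense_in X (\<Union>n. E n)"
    by blast
qed

end
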